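(* Let $R=X^\dagger X\in\mathcal C_{K_0}$ with $X=\bigoplus_k(I_{\mathcal H_k}\otimes X_k)\in\mathcal A'_G$ such that exactly one $X_k$ is nonzero and it has rank one. Then $R$ is extremal in $\mathcal C_{K_0}$.
   Context: Let $\mathcal H,\mathcal K$ be finite-dimensional Hilbert spaces and $g\mapsto U_g$, $g\mapsto V_g$ unitary representations of a group $G$ on $\mathcal H$ and $\mathcal K$; $U_g^*$ is the complex conjugate in a fixed basis. Decompose $\mathcal K\otimes\mathcal H=\bigoplus_k(\mathcal H_k\otimes\mathbb C^{m_k})$ according to the equivalence classes $k$ of irreducible components of $V_g\otimes U_g^*$ (irreducible space $\mathcal H_k$, multiplicity $m_k$). The commutant $\mathcal A'_G$ consists of operators $\bigoplus_k(I_{\mathcal H_k}\otimes M_k)$. Fix $0\le K_0\le I_{\mathcal H}$ and let $\mathcal C_{K_0}=\{R\in\mathcal A'_G: R\ge0,\ \operatorname{Tr}_{\mathcal K}[R]=K_0\}$. *)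

theory Defs
  imports "Jordan_Normal_Form.DL_Rank" "Jordan_Normal_Form.Schur_Decomposition" "HOL-Algebra.Group"
begin

text \<open>Operators on finite-dimensional Hilbert spaces are complex matrices. H = C^dH, K = C^dK,
  and K (x) H = C^(dK*dH) with the Kronecker ordering: basis index a*dH + i (a<dK, i<dH).\<close>

definition kron :: "complex mat \<Rightarrow> complex mat \<Rightarrow> complex mat" where
  "kron A B = mat (dim_row A * dim_row B) (dim_col A * dim_col B)
     (\<lambda>(i,j). A $$ (i div dim_row B, j div dim_col B) * B $$ (i mod dim_row B, j mod dim_col B))"

definition ptrace_K :: "nat \<Rightarrow> nat \<Rightarrow> complex mat \<Rightarrow> complex mat" where
  "ptrace_K dK dH R = mat dH dH (\<lambda>(i,j). \<Sum>a<dK. R $$ (a*dH+i, a*dH+j))"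

definition psd :: "nat \<Rightarrow> complex mat \<Rightarrow> bool" where
  "psd n A \<longleftrightarrow> A \<in> carrier_mat n n \<and> (\<forall>v\<in>carrier_vec n. 0 \<le> (A *\<^sub>v v) \<bullet>c v)"

definition unitary_mat :: "nat \<Rightarrow> complex mat \<Rightarrow> bool" where
  "unitary_mat n A \<longleftrightarrow> A \<in> carrier_mat n n \<and> mat_adjoint A * A = 1\<^sub>m n \<and> A * mat_adjoint A = 1\<^sub>m n"

definition unitary_rep :: "('g,'b) monoid_scheme \<Rightarrow> nat \<Rightarrow> ('g \<Rightarrow> complex mat) \<Rightarrow> bool" where
  "unitary_rep G n U \<longleftrightarrow> (\<forall>g\<in>carrier G. unitary_mat n (U g)) \<and>
     (\<forall>g\<in>carrier G. \<forall>h\<in>carrier G. U (g \<otimes>\<^bsub>G\<^esub> h) = U g * U h)"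

definition irreducible_rep :: "('g,'b) monoid_scheme \<Rightarrow> nat \<Rightarrow> ('g \<Rightarrow> complex mat) \<Rightarrow> bool" where
  "irreducible_rep G n p \<longleftrightarrow> 0 < n \<and>
     (\<forall>S. S \<subseteq> carrier_vec n \<and> 0\<^sub>v n \<in> S \<and> (\<forall>v\<in>S. \<forall>w\<in>S. v + w \<in> S)
          \<and> (\<forall>c. \<forall>v\<in>S. c \<cdot>\<^sub>v v \<in> S) \<and> (\<forall>g\<in>carrier G. \<forall>v\<in>S. p g *\<^sub>v v \<in> S)
        \<longrightarrow> S = {0\<^sub>v n} \<or> S = carrier_vec n)"

definition equiv_rep :: "('g,'b) monoid_scheme \<Rightarrow> nat \<Rightarrow> ('g \<Rightarrow> complex mat) \<Rightarrow> nat \<Rightarrow> ('g \<Rightarrow> complex mat) \<Rightarrow> bool" where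
  "equiv_rep G n p n' p' \<longleftrightarrow> n = n' \<and>
     (\<exists>T\<in>carrier_mat n n. invertible_mat T \<and> (\<forall>g\<in>carrier G. T * p g = p' g * T))"

text \<open>Decomposition of V_g (x) conj(U_g) on K (x) H into inequivalent irreducible classes
  k < n, with irreducible space C^(d k), irrep p k, multiplicity m k, implemented by the unitary W:
  W^dagger (V_g (x) U_g^* ) W = (+)_k (p_k(g) (x) I_(m k)).\<close>
definition isotypic_decomp ::
  "('g,'b) monoid_scheme \<Rightarrow> nat \<Rightarrow> nat \<Rightarrow> ('g \<Rightarrow> complex mat) \<Rightarrow> ('g \<Rightarrow> complex mat)
   \<Rightarrow> nat \<Rightarrow> (nat \<Rightarrow> nat) \<Rightarrow> (nat \<Rightarrow> nat) \<Rightarrow> (nat \<Rightarrow> 'g \<Rightarrow> complex mat) \<Rightarrow> complex mat \<Rightarrow> bool" where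
  "isotypic_decomp G dK dH U V n d m p W \<longleftrightarrow>
     (\<forall>k<n. unitary_rep G (d k) (p k) \<and> irreducible_rep G (d k) (p k) \<and> 0 < m k) \<and>
     (\<forall>k<n. \<forall>l<n. k \<noteq> l \<longrightarrow> \<not> equiv_rep G (d k) (p k) (d l) (p l)) \<and>
     (\<Sum>k<n. d k * m k) = dK * dH \<and>
     unitary_mat (dK * dH) W \<and>
     (\<forall>g\<in>carrier G. mat_adjoint W * kron (V g) (map_mat cnj (U g)) * W
        = diag_block_mat (map (\<lambda>k. kron (p k g) (1\<^sub>m (m k))) [0..<n]))"

definition comm_op :: "complex mat \<Rightarrow> nat \<Rightarrow> (nat \<Rightarrow> nat) \<Rightarrow> (nat \<Rightarrow> complex mat) \<Rightarrow> complex mat" where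
  "comm_op W n d M = W * diag_block_mat (map (\<lambda>k. kron (1\<^sub>m (d k)) (M k)) [0..<n]) * mat_adjoint W"

definition commutant :: "complex mat \<Rightarrow> nat \<Rightarrow> (nat \<Rightarrow> nat) \<Rightarrow> (nat \<Rightarrow> nat) \<Rightarrow> complex mat set" where
  "commutant W n d m = {comm_op W n d M | M. \<forall>k<n. M k \<in> carrier_mat (m k) (m k)}"

definition C_set :: "nat \<Rightarrow> nat \<Rightarrow> complex mat \<Rightarrow> nat \<Rightarrow> (nat \<Rightarrow> nat) \<Rightarrow> (nat \<Rightarrow> nat) \<Rightarrow> complex mat \<Rightarrow> complex mat set" where
  "C_set dK dH W n d m K0 = {R \<in> commutant W n d m. psd (dK * dH) R \<and> ptrace_K dK dH R = K0}"

definition extremal_in :: "complex mat set \<Rightarrow> complex mat \<Rightarrow> bool" where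
  "extremal_in C R \<longleftrightarrow> R \<in> C \<and>
     (\<forall>R1\<in>C. \<forall>R2\<in>C. \<forall>t::real. 0 < t \<and> t < 1 \<and>
        R = complex_of_real t \<cdot>\<^sub>m R1 + complex_of_real (1 - t) \<cdot>\<^sub>m R2 \<longrightarrow> R1 = R \<and> R2 = R)"

end

theory Submission
  imports Defs
begin

lemma rank1_decomp:
  fixes X :: "complex mat"
  assumes X: "X \<in> carrier_mat m m" and r: "vec_space.rank m X = 1"
  shows "\<exists>u\<in>carrier_vec m. \<exists>a. \<forall>i<m. \<forall>j<m. X $$ (i,j) = a j * u $ i"
proof -
  interpret V: vec_space "TYPE(complex)" m .
  have cs: "set (cols X) \<subseteq> carrier_vec m" using X cols_dim by blast
  obtain S where S: "maximal S (\<lambda>T. T \<subseteq> set (cols X) \<and> V.lin_indpt T)"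
    using maximal_exists[of "(\<lambda>T. T \<subseteq> set (cols X) \<and> V.lin_indpt T)" "card (set (cols X))" "{}"]
    by (meson List.finite_set card_mono empty_iff empty_subsetI V.finite_lin_indpt2 rev_finite_subset)
  have "V.rank X = card S" using V.rank_card_indpt[OF X S] .
  with r have "card S = 1" by simp
  then obtain u where Su: "S = {u}" using card_1_singletonE by blast
  have Sm: "S \<subseteq> set (cols X) \<and> V.lin_indpt S" and Smax: "\<And>B. S \<subseteq> B \<Longrightarrow> B \<subseteq> set (cols X) \<and> V.lin_indpt B \<Longrightarrow> B = S"
    using S unfolding maximal_def by blast+
  have uS: "u \<in> set (cols X)" "V.lin_indpt {u}" using Sm unfolding Su by auto
  have um: "u \<in> carrier_vec m" using uS cs by auto
  have inspan: "c \<in> V.span {u}" if c: "c \<in> set (cols X)" for c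
  proof (cases "c = u")
    case True then show ?thesis using V.in_own_span[of "{u}"] um by auto
  next
    case False
    have "\<not> V.lin_indpt ({u} \<union> {c})"
    proof
      assume li: "V.lin_indpt ({u} \<union> {c})"
      have "{u} \<union> {c} = {u}" using Smax[of "{u} \<union> {c}"] li c uS unfolding Su by blast
      with False show False by auto
    qed
    have cm: "c \<in> carrier_vec m" using c cs by auto
    have "c \<in> V.span {u} \<longleftrightarrow> V.lin_dep ({u} \<union> {c})"
      by (rule V.lin_dep_iff_in_span, insert um uS cm False, auto)
    then show ?thesis using \<open>\<not> V.lin_indpt ({u} \<union> {c})\<close> by blast
  qed
  have "\<forall>j<m. \<exists>aj. col X j = aj \<cdot>\<^sub>v u"
  proof (intro allI impI)
    fix j assume j: "j < m"
    have "col X j \<in> set (cols X)" using j X by (metis cols_length cols_nth carrier_matD(2) nth_mem)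
    then have "col X j \<in> V.span {u}" by (rule inspan)
    then obtain a where "V.lincomb a {u} = col X j"
      using V.finite_in_span[of "{u}" "col X j"] um by auto
    moreover have "V.lincomb a {u} = a u \<cdot>\<^sub>v u"
    proof (rule eq_vecI)
      show "dim_vec (V.lincomb a {u}) = dim_vec (a u \<cdot>\<^sub>v u)" using V.lincomb_dim[of "{u}" a] um by simp
      fix i assume "i < dim_vec (a u \<cdot>\<^sub>v u)"
      then have i: "i < m" using um by simp
      show "V.lincomb a {u} $ i = (a u \<cdot>\<^sub>v u) $ i" using V.lincomb_index[OF i, of "{u}" a] um i by simp
    qed
    ultimately show "\<exists>aj. col X j = aj \<cdot>\<^sub>v u" by metis
  qed
  then obtain a where a: "\<And>j. j < m \<Longrightarrow> col X j = a j \<cdot>\<^sub>v u" by metis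
  have "\<forall>i<m. \<forall>j<m. X $$ (i,j) = a j * u $ i"
  proof (intro allI impI)
    fix i j assume i: "i < m" and j: "j < m"
    have "X $$ (i,j) = col X j $ i" using i j X by auto
    also have "\<dots> = a j * u $ i" using a[OF j] i um by auto
    finally show "X $$ (i,j) = a j * u $ i" .
  qed
  then show ?thesis using um by blast
qed


lemma quad_nonneg_zero:
  fixes p g :: real
  assumes "\<And>e::real. 0 \<le> e * p + e^2 * g" and "g \<ge> 0"
  shows "p = 0"
proof -
  define e where "e = - p / (g + 1)"
  have d: "g + 1 > 0" using assms(2) by simp
  have E: "(g+1)*e = -p" unfolding e_def using d by simp
  have "(g+1)^2 * (e*p + e^2*g) = (g+1)*((g+1)*e)*p + ((g+1)*e)^2*g"
    by (simp add: power2_eq_square algebra_simps)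
  also have "\<dots> = -(p^2)" unfolding E by (simp add: power2_eq_square algebra_simps)
  finally have "-(p^2) \<ge> 0" using assms(1)[of e] d by (metis zero_le_mult_iff zero_le_power2)
  then show "p = 0" by simp
qed

lemma quad_expand:
  fixes A :: "complex mat"
  assumes A: "A \<in> carrier_mat N N" and v: "v \<in> carrier_vec N" and y: "y \<in> carrier_vec N"
  shows "(A *\<^sub>v (v + s \<cdot>\<^sub>v y)) \<bullet>c (v + s \<cdot>\<^sub>v y)
    = (A *\<^sub>v v) \<bullet>c v + cnj s * ((A *\<^sub>v v) \<bullet>c y) + s * ((A *\<^sub>v y) \<bullet>c v) + s * cnj s * ((A *\<^sub>v y) \<bullet>c y)"
proof -
  have Av: "A *\<^sub>v v \<in> carrier_vec N" and Ay: "A *\<^sub>v y \<in> carrier_vec N" using A v y by auto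
  have cv: "conjugate v \<in> carrier_vec N" and cy: "conjugate y \<in> carrier_vec N" using v y by auto
  have 1: "A *\<^sub>v (v + s \<cdot>\<^sub>v y) = A *\<^sub>v v + s \<cdot>\<^sub>v (A *\<^sub>v y)"
    using A v y by (simp add: mult_add_distrib_mat_vec mult_mat_vec)
  have 2: "conjugate (v + s \<cdot>\<^sub>v y) = conjugate v + cnj s \<cdot>\<^sub>v conjugate y"
    using v y by (simp add: conjugate_add_vec[of _ N] conjugate_smult_vec)
  show ?thesis unfolding 1 2
    using Av Ay cv cy
    by (simp add: add_scalar_prod_distrib[of _ N] scalar_prod_add_distrib[of _ N]
        smult_scalar_prod_distrib[of _ N] scalar_prod_smult_distrib[of _ N] algebra_simps)
qed

lemma psd_ker:
  fixes A :: "complex mat"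
  assumes P: "psd N A" and v: "v \<in> carrier_vec N" and z: "(A *\<^sub>v v) \<bullet>c v = 0"
    and y: "y \<in> carrier_vec N"
  shows "(A *\<^sub>v y) \<bullet>c v = 0 \<and> (A *\<^sub>v v) \<bullet>c y = 0"
proof -
  have A: "A \<in> carrier_mat N N" using P unfolding psd_def by auto
  have pos: "\<And>u. u \<in> carrier_vec N \<Longrightarrow> 0 \<le> (A *\<^sub>v u) \<bullet>c u" using P unfolding psd_def by auto
  define a where "a = (A *\<^sub>v v) \<bullet>c y"
  define b where "b = (A *\<^sub>v y) \<bullet>c v"
  define g where "g = (A *\<^sub>v y) \<bullet>c y"
  have g: "Re g \<ge> 0" "Im g = 0" using pos[OF y] unfolding g_def by (auto simp: less_eq_complex_def)
  have ex: "\<And>s. 0 \<le> cnj s * a + s * b + s * cnj s * g"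
  proof -
    fix s
    have "0 \<le> (A *\<^sub>v (v + s \<cdot>\<^sub>v y)) \<bullet>c (v + s \<cdot>\<^sub>v y)" using pos v y by auto
    then show "0 \<le> cnj s * a + s * b + s * cnj s * g"
      unfolding quad_expand[OF A v y] z a_def b_def g_def by simp
  qed
  have r1: "\<And>e::real. 0 \<le> e * Re (a + b) + e^2 * Re g"
  proof -
    fix e :: real
    from ex[of "complex_of_real e"] show "0 \<le> e * Re (a + b) + e^2 * Re g"
      by (simp add: less_eq_complex_def power2_eq_square algebra_simps)
  qed
  have i1: "Im (a + b) = 0"
    using ex[of 1] g by (simp add: less_eq_complex_def)
  have r2: "\<And>e::real. 0 \<le> e * Im (a - b) + e^2 * Re g"
  proof -
    fix e :: real
    from ex[of "\<i> * complex_of_real e"] g show "0 \<le> e * Im (a - b) + e^2 * Re g"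
      by (simp add: less_eq_complex_def power2_eq_square algebra_simps)
  qed
  have i2: "Re (a - b) = 0"
    using ex[of "\<i>"] g by (simp add: less_eq_complex_def algebra_simps)
  have "Re (a + b) = 0" using quad_nonneg_zero[OF r1 g(1)] .
  moreover have "Im (a - b) = 0" using quad_nonneg_zero[OF r2 g(1)] .
  ultimately have "a = 0" "b = 0" using i1 i2 by (auto simp: complex_eq_iff)
  then show ?thesis unfolding a_def b_def by simp
qed

lemma psd_ker_vec:
  fixes A :: "complex mat"
  assumes P: "psd N A" and v: "v \<in> carrier_vec N" and z: "(A *\<^sub>v v) \<bullet>c v = 0"
  shows "A *\<^sub>v v = 0\<^sub>v N"
proof -
  have A: "A \<in> carrier_mat N N" using P unfolding psd_def by auto
  have "(A *\<^sub>v v) \<bullet>c (A *\<^sub>v v) = 0" using psd_ker[OF P v z, of "A *\<^sub>v v"] A v by auto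
  then show ?thesis using A v conjugate_square_eq_0_vec[of "A *\<^sub>v v" N] by auto
qed


definition off :: "(nat \<Rightarrow> nat) \<Rightarrow> (nat \<Rightarrow> nat) \<Rightarrow> nat \<Rightarrow> nat" where
  "off d m k = (\<Sum>l<k. d l * m l)"

definition Bm :: "nat \<Rightarrow> (nat \<Rightarrow> nat) \<Rightarrow> (nat \<Rightarrow> complex mat) \<Rightarrow> complex mat" where
  "Bm n d M = diag_block_mat (map (\<lambda>k. kron (1\<^sub>m (d k)) (M k)) [0..<n])"

lemma off_Suc: "off d m (Suc k) = off d m k + d k * m k"
  unfolding off_def by simp

lemma off_mono: "k \<le> l \<Longrightarrow> off d m k \<le> off d m l"
  unfolding off_def by (rule sum_mono2) auto

lemma off_block_le:
  assumes "k < n" "a < d k"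
  shows "off d m k + a * m k + m k \<le> off d m n"
proof -
  have "a * m k + m k \<le> d k * m k" using assms(2)
    by (metis add.commute mult_Suc mult_le_mono1 Suc_leI)
  then have "off d m k + a * m k + m k \<le> off d m (Suc k)" unfolding off_Suc by simp
  also have "\<dots> \<le> off d m n" using off_mono assms(1) by auto
  finally show ?thesis .
qed

lemma div_iff_window: assumes m: "(mm::nat) > 0" shows "(i div mm = a) \<longleftrightarrow> (a * mm \<le> i \<and> i < a * mm + mm)"
proof
  assume "i div mm = a"
  then have e: "i = a * mm + i mod mm" by (metis div_mult_mod_eq)
  have "i mod mm < mm" using m by simp
  then show "a * mm \<le> i \<and> i < a * mm + mm" using e by linarith
next
  assume w: "a * mm \<le> i \<and> i < a * mm + mm"
  then show "i div mm = a"
    by (metis add.commute div_nat_eqI mult.commute mult_Suc_right)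
qed

lemma kron_one_dims:
  "dim_row (kron (1\<^sub>m dd) M) = dd * dim_row M" "dim_col (kron (1\<^sub>m dd) M) = dd * dim_col M"
  unfolding kron_def by auto

lemma kron_one_index:
  assumes M: "M \<in> carrier_mat mm mm" and i: "i < dd * mm" and j: "j < dd * mm"
  shows "kron (1\<^sub>m dd) M $$ (i,j) = (if i div mm = j div mm then M $$ (i mod mm, j mod mm) else 0)"
proof -
  have mm: "mm > 0" using i by (cases mm) auto
  have "i div mm < dd" "j div mm < dd" using i j mm by (auto simp: less_mult_imp_div_less)
  then show ?thesis using M i j unfolding kron_def by auto
qed

lemma Bm_Suc: "Bm (Suc n) d M = (let A = Bm n d M; B = kron (1\<^sub>m (d n)) (M n) in
   four_block_mat A (0\<^sub>m (dim_row A) (dim_col B)) (0\<^sub>m (dim_row B) (dim_col A)) B)"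
  unfolding Bm_def by (simp add: diag_block_mat_last Let_def)

lemma Bm_col:
  assumes "\<forall>k<n. M k \<in> carrier_mat (m k) (m k)"
  shows "Bm n d M \<in> carrier_mat (off d m n) (off d m n) \<and>
    (\<forall>k<n. \<forall>a<d k. \<forall>b<m k. \<forall>i<off d m n.
      Bm n d M $$ (i, off d m k + a * m k + b) =
      (if off d m k + a * m k \<le> i \<and> i < off d m k + a * m k + m k
       then M k $$ (i - (off d m k + a * m k), b) else 0))"
  using assms
proof (induction n)
  case 0
  then show ?case unfolding Bm_def off_def by auto
next
  case (Suc n)
  have IH: "Bm n d M \<in> carrier_mat (off d m n) (off d m n)"
    "\<And>k a b i. k<n \<Longrightarrow> a<d k \<Longrightarrow> b<m k \<Longrightarrow> i<off d m n \<Longrightarrow>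
      Bm n d M $$ (i, off d m k + a * m k + b) =
      (if off d m k + a * m k \<le> i \<and> i < off d m k + a * m k + m k
       then M k $$ (i - (off d m k + a * m k), b) else 0)"
    using Suc by auto
  have Mn: "M n \<in> carrier_mat (m n) (m n)" using Suc.prems by auto
  define K where "K = kron (1\<^sub>m (d n)) (M n)"
  have dMn: "dim_row (M n) = m n" "dim_col (M n) = m n" using Mn by auto
  have dK: "dim_row K = d n * m n" "dim_col K = d n * m n"
    unfolding K_def kron_one_dims dMn by simp_all
  have K: "K \<in> carrier_mat (d n * m n) (d n * m n)" using dK by (intro carrier_matI) simp_all
  have dB: "dim_row (Bm n d M) = off d m n" "dim_col (Bm n d M) = off d m n" using IH(1) by auto
  have eq: "Bm (Suc n) d M = four_block_mat (Bm n d M) (0\<^sub>m (off d m n) (d n * m n)) (0\<^sub>m (d n * m n) (off d m n)) K"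
    unfolding Bm_Suc Let_def K_def[symmetric] dB dK by (rule refl)
  have car: "Bm (Suc n) d M \<in> carrier_mat (off d m (Suc n)) (off d m (Suc n))"
    unfolding eq off_Suc by (rule four_block_carrier_mat[OF IH(1) K])
  have ent: "Bm (Suc n) d M $$ (i, off d m k + a * m k + b) =
      (if off d m k + a * m k \<le> i \<and> i < off d m k + a * m k + m k
       then M k $$ (i - (off d m k + a * m k), b) else 0)"
    if k: "k < Suc n" and a: "a < d k" and b: "b < m k" and i: "i < off d m (Suc n)" for k a b i
  proof -
    have jlt: "off d m k + a * m k + b < off d m (Suc n)"
      using off_block_le[of k "Suc n" a d m, OF k a] b by simp
    have four: "Bm (Suc n) d M $$ (i, off d m k + a * m k + b) =
      (if i < off d m n then
      if off d m k + a * m k + b < off d m n then Bm n d M $$ (i, off d m k + a * m k + b) else 0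
      else if off d m k + a * m k + b < off d m n then 0 else K $$ (i - off d m n, off d m k + a * m k + b - off d m n))"
      unfolding eq
      apply (subst index_mat_four_block(1))
      subgoal using i unfolding off_Suc by (simp add: dB dK)
      subgoal using jlt unfolding off_Suc by (simp add: dB dK)
      using i jlt unfolding off_Suc by (simp add: dB dK)
    show ?thesis
    proof (cases "k < n")
      case True
      have jn: "off d m k + a * m k + m k \<le> off d m n" using off_block_le[of k n a d m, OF True a] .
      show ?thesis
      proof (cases "i < off d m n")
        case True
        then show ?thesis using four IH(2)[OF \<open>k<n\<close> a b True] jn b by auto
      next
        case False
        then show ?thesis using four jn b by auto
      qed
    next
      case False
      then have kn: "k = n" using k by auto
      show ?thesis
      proof (cases "i < off d m n")
        case True
        then show ?thesis using four kn by auto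
      next
        case False
        define i' where "i' = i - off d m n"
        have i': "i' < d n * m n" using i False unfolding i'_def off_Suc by auto
        have j': "a * m n + b < d n * m n" using off_block_le[of k "Suc k" a d m] a b kn
          unfolding off_Suc by simp
        have mpos: "m n > 0" using b kn by auto
        have Kij: "K $$ (i', a * m n + b) = (if i' div m n = a then M n $$ (i' mod m n, b) else 0)"
          unfolding K_def using kron_one_index[OF Mn i' j'] b kn mpos by simp
        have iff: "(i' div m n = a) \<longleftrightarrow> (a * m n \<le> i' \<and> i' < a * m n + m n)"
          using div_iff_window[OF mpos] by blast
        have md: "i' div m n = a \<Longrightarrow> i' mod m n = i' - a * m n"
          by (metis minus_div_mult_eq_mod mult.commute)
        show ?thesis using four False kn Kij iff md unfolding i'_def
          by (auto simp: algebra_simps)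
      qed
    qed
  qed
  show ?case using car ent by blast
qed


definition emb :: "nat \<Rightarrow> nat \<Rightarrow> nat \<Rightarrow> complex vec \<Rightarrow> complex vec" where
  "emb N s mm x = vec N (\<lambda>i. if s \<le> i \<and> i < s + mm then x $ (i - s) else 0)"

lemma emb_carrier[simp]: "emb N s mm x \<in> carrier_vec N" unfolding emb_def by simp
lemma emb_dim[simp]: "dim_vec (emb N s mm x) = N" unfolding emb_def by simp

lemma sum_window:
  fixes f :: "nat \<Rightarrow> 'a::comm_monoid_add"
  assumes "s + mm \<le> N" and "\<And>j. j < N \<Longrightarrow> \<not> (s \<le> j \<and> j < s + mm) \<Longrightarrow> f j = 0"
  shows "(\<Sum>j<N. f j) = (\<Sum>b<mm. f (s + b))"
proof -
  have "(\<Sum>j<N. f j) = (\<Sum>j\<in>{s..<s+mm}. f j)"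
    by (rule sum.mono_neutral_right) (use assms in auto)
  also have "\<dots> = (\<Sum>b<mm. f (s + b))"
  proof -
    have "{s..<s+mm} = (\<lambda>b. s + b) ` {..<mm}" 
      by (auto simp: image_iff) (rule_tac x="x - s" in bexI, auto)
    then show ?thesis by (simp add: sum.reindex)
  qed
  finally show ?thesis .
qed

lemma emb_zero: "emb N s mm (0\<^sub>v mm) = 0\<^sub>v N"
  unfolding emb_def by (rule eq_vecI) auto

lemma emb_inj:
  assumes "s + mm \<le> N" "x \<in> carrier_vec mm" "emb N s mm x = 0\<^sub>v N"
  shows "x = 0\<^sub>v mm"
proof (rule eq_vecI)
  fix b assume "b < dim_vec (0\<^sub>v mm)"
  then have b: "b < mm" by simp
  have "emb N s mm x $ (s + b) = 0" using assms(3) assms(1) b by simp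
  then show "x $ b = 0\<^sub>v mm $ b" using assms(1) b unfolding emb_def by simp
qed (use assms in auto)

lemma emb_inner:
  assumes "s + mm \<le> N" "x \<in> carrier_vec mm" "y \<in> carrier_vec mm"
  shows "emb N s mm x \<bullet>c emb N s mm y = x \<bullet>c y"
proof -
  have "emb N s mm x \<bullet>c emb N s mm y = (\<Sum>j<N. emb N s mm x $ j * cnj (emb N s mm y $ j))"
    unfolding scalar_prod_def by (simp add: lessThan_atLeast0)
  also have "\<dots> = (\<Sum>b<mm. emb N s mm x $ (s+b) * cnj (emb N s mm y $ (s+b)))"
    by (rule sum_window) (use assms in \<open>auto simp: emb_def\<close>)
  also have "\<dots> = (\<Sum>b<mm. x $ b * cnj (y $ b))"
    by (rule sum.cong) (use assms in \<open>auto simp: emb_def\<close>)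
  also have "\<dots> = x \<bullet>c y" using assms unfolding scalar_prod_def by (simp add: lessThan_atLeast0)
  finally show ?thesis .
qed

lemma Bm_emb:
  assumes M: "\<forall>k<n. M k \<in> carrier_mat (m k) (m k)" and k: "k < n" and a: "a < d k"
    and x: "x \<in> carrier_vec (m k)"
  shows "Bm n d M *\<^sub>v emb (off d m n) (off d m k + a * m k) (m k) x
       = emb (off d m n) (off d m k + a * m k) (m k) (M k *\<^sub>v x)"
proof -
  define s where "s = off d m k + a * m k"
  define N where "N = off d m n"
  have sN: "s + m k \<le> N" unfolding s_def N_def using off_block_le[of k n a d m, OF k a] by simp
  have BC: "Bm n d M \<in> carrier_mat N N" and col: "\<And>b i. b < m k \<Longrightarrow> i < N \<Longrightarrow>
      Bm n d M $$ (i, s + b) = (if s \<le> i \<and> i < s + m k then M k $$ (i - s, b) else 0)"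
    using Bm_col[OF M] k a unfolding s_def N_def by (auto simp: add.assoc)
  have Mk: "M k \<in> carrier_mat (m k) (m k)" using M k by auto
  show ?thesis unfolding s_def[symmetric] N_def[symmetric]
  proof (rule eq_vecI)
    show "dim_vec (Bm n d M *\<^sub>v emb N s (m k) x) = dim_vec (emb N s (m k) (M k *\<^sub>v x))"
      using BC by simp
    fix i assume "i < dim_vec (emb N s (m k) (M k *\<^sub>v x))"
    then have i: "i < N" by simp
    have "(Bm n d M *\<^sub>v emb N s (m k) x) $ i = (\<Sum>j<N. Bm n d M $$ (i,j) * emb N s (m k) x $ j)"
      using BC i unfolding mult_mat_vec_def scalar_prod_def by (simp add: lessThan_atLeast0)
    also have "\<dots> = (\<Sum>b<m k. Bm n d M $$ (i,s+b) * emb N s (m k) x $ (s+b))"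
      by (rule sum_window) (use sN in \<open>auto simp: emb_def\<close>)
    also have "\<dots> = (\<Sum>b<m k. (if s \<le> i \<and> i < s + m k then M k $$ (i - s, b) else 0) * x $ b)"
      by (rule sum.cong) (use sN col i in \<open>auto simp: emb_def\<close>)
    also have "\<dots> = emb N s (m k) (M k *\<^sub>v x) $ i"
    proof (cases "s \<le> i \<and> i < s + m k")
      case True
      then have "emb N s (m k) (M k *\<^sub>v x) $ i = (M k *\<^sub>v x) $ (i - s)" using i unfolding emb_def by simp
      also have "\<dots> = (\<Sum>b<m k. M k $$ (i - s, b) * x $ b)"
        using Mk x True unfolding mult_mat_vec_def scalar_prod_def by (simp add: lessThan_atLeast0 less_diff_conv2 add.commute)
      finally show ?thesis using True by simp
    next
      case False
      have "emb N s (m k) (M k *\<^sub>v x) $ i = 0" using i False unfolding emb_def by auto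
      moreover have "(\<Sum>b<m k. (if s \<le> i \<and> i < s + m k then M k $$ (i - s, b) else 0) * x $ b) = 0"
        using False by (intro sum.neutral) auto
      ultimately show ?thesis by simp
    qed
    finally show "(Bm n d M *\<^sub>v emb N s (m k) x) $ i = emb N s (m k) (M k *\<^sub>v x) $ i" .
  qed
qed


lemma rank1_ker:
  fixes X :: "complex mat"
  assumes X: "X \<in> carrier_mat m m" and nz: "X \<noteq> 0\<^sub>m m m" and r: "vec_space.rank m X = 1"
  shows "\<exists>w\<in>carrier_vec m. w \<noteq> 0\<^sub>v m \<and> (\<forall>x\<in>carrier_vec m. x \<bullet>c w = 0 \<longrightarrow> X *\<^sub>v x = 0\<^sub>v m)"
proof -
  obtain u a where u: "u \<in> carrier_vec m" and Xa: "\<And>i j. i<m \<Longrightarrow> j<m \<Longrightarrow> X $$ (i,j) = a j * u $ i"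
    using rank1_decomp[OF X r] by blast
  define w where "w = vec m (\<lambda>j. cnj (a j))"
  have w: "w \<in> carrier_vec m" unfolding w_def by simp
  have ker: "X *\<^sub>v x = 0\<^sub>v m" if x: "x \<in> carrier_vec m" and o: "x \<bullet>c w = 0" for x
  proof (rule eq_vecI)
    fix i assume "i < dim_vec (0\<^sub>v m)"
    then have i: "i < m" by simp
    have "(X *\<^sub>v x) $ i = (\<Sum>j<m. X $$ (i,j) * x $ j)"
      using X x i unfolding mult_mat_vec_def scalar_prod_def by (simp add: lessThan_atLeast0)
    also have "\<dots> = u $ i * (\<Sum>j<m. x $ j * a j)"
      using Xa i by (simp add: sum_distrib_left algebra_simps)
    also have "(\<Sum>j<m. x $ j * a j) = x \<bullet>c w"
      using x unfolding w_def scalar_prod_def by (simp add: lessThan_atLeast0)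
    finally show "(X *\<^sub>v x) $ i = 0\<^sub>v m $ i" using o i by simp
  qed (use X in auto)
  have "w \<noteq> 0\<^sub>v m"
  proof
    assume w0: "w = 0\<^sub>v m"
    have "X = 0\<^sub>m m m"
    proof (rule eq_matI)
      fix i j assume "i < dim_row (0\<^sub>m m m)" "j < dim_col (0\<^sub>m m m)"
      then have i: "i < m" and j: "j < m" by auto
      have "cnj (a j) = 0" using arg_cong[OF w0, of "\<lambda>v. v $ j"] j unfolding w_def by simp
      then show "X $$ (i,j) = 0\<^sub>m m m $$ (i,j)" using Xa[OF i j] i j by simp
    qed (use X in auto)
    with nz show False by simp
  qed
  then show ?thesis using w ker by blast
qed

lemma conj_unit_vec: "conjugate (unit_vec m i) = (unit_vec m i :: complex vec)"
  by (rule eq_vecI) (auto simp: unit_vec_def)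

lemma cinner_unit_right: "v \<in> carrier_vec m \<Longrightarrow> i < m \<Longrightarrow> v \<bullet>c unit_vec m i = (v $ i :: complex)"
  by (simp add: conj_unit_vec)

lemma cinner_unit_left: "w \<in> carrier_vec m \<Longrightarrow> i < m \<Longrightarrow> unit_vec m i \<bullet>c w = cnj (w $ i :: complex)"
  by simp

lemma cinner_minus_smult:
  fixes v x w :: "complex vec"
  assumes "v \<in> carrier_vec m" "x \<in> carrier_vec m" "w \<in> carrier_vec m"
  shows "v \<bullet>c (x - c \<cdot>\<^sub>v w) = v \<bullet>c x - cnj c * (v \<bullet>c w)"
proof -
  have "v \<bullet>c (x - c \<cdot>\<^sub>v w) = (\<Sum>i<m. v $ i * (cnj (x $ i) - cnj c * cnj (w $ i)))"
    using assms unfolding scalar_prod_def by (simp add: lessThan_atLeast0)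
  also have "\<dots> = (\<Sum>i<m. v $ i * cnj (x $ i)) - cnj c * (\<Sum>i<m. v $ i * cnj (w $ i))"
    by (simp add: algebra_simps sum_subtractf sum_distrib_left)
  also have "\<dots> = v \<bullet>c x - cnj c * (v \<bullet>c w)"
    using assms unfolding scalar_prod_def by (simp add: lessThan_atLeast0)
  finally show ?thesis .
qed

lemma vec_eq_from_diff:
  fixes a b :: "complex vec"
  assumes "a \<in> carrier_vec m" "b \<in> carrier_vec m" "0\<^sub>v m = a - b"
  shows "a = b"
proof (rule eq_vecI)
  fix i assume "i < dim_vec b"
  then have i: "i < m" using assms by simp
  have "(a - b) $ i = 0" using assms(3)[symmetric] i by simp
  then show "a $ i = b $ i" using assms i by simp
qed (use assms in auto)

lemma rank1_form:
  fixes A :: "complex mat" and w :: "complex vec"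
  assumes A: "A \<in> carrier_mat m m" and w: "w \<in> carrier_vec m" and wnz: "w \<noteq> 0\<^sub>v m"
    and H1: "\<And>x. x \<in> carrier_vec m \<Longrightarrow> x \<bullet>c w = 0 \<Longrightarrow> A *\<^sub>v x = 0\<^sub>v m"
    and H2: "\<And>x y. x \<in> carrier_vec m \<Longrightarrow> y \<in> carrier_vec m \<Longrightarrow> x \<bullet>c w = 0 \<Longrightarrow> (A *\<^sub>v y) \<bullet>c x = 0"
  shows "\<exists>c. A = c \<cdot>\<^sub>m mat m m (\<lambda>(i,j). w $ i * cnj (w $ j))"
proof -
  define wn where "wn = w \<bullet>c w"
  have wn0: "wn \<noteq> 0" unfolding wn_def using wnz w by simp
  have cwn: "cnj wn = wn" unfolding wn_def using w
    by (metis conjugate_complex_def conjugate_conjugate_sprod conjugate_vec_sprod_comm)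
  define P where "P = (\<lambda>x. x - ((x \<bullet>c w) / wn) \<cdot>\<^sub>v w)"
  have Pc: "x \<in> carrier_vec m \<Longrightarrow> P x \<in> carrier_vec m" for x unfolding P_def using w by auto
  have Po: "(P x) \<bullet>c w = 0" if x: "x \<in> carrier_vec m" for x
  proof -
    have "(P x) \<bullet>c w = x \<bullet>c w - ((x \<bullet>c w) / wn) * wn"
      unfolding P_def wn_def using x w
      by (simp add: minus_scalar_prod_distrib[of _ m] smult_scalar_prod_distrib[of _ m])
    then show ?thesis using wn0 by simp
  qed
  have Ax: "A *\<^sub>v x = ((x \<bullet>c w) / wn) \<cdot>\<^sub>v (A *\<^sub>v w)" if x: "x \<in> carrier_vec m" for x
  proof -
    have "0\<^sub>v m = A *\<^sub>v P x" using H1[OF Pc[OF x] Po[OF x]] by simp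
    also have "\<dots> = A *\<^sub>v x - ((x \<bullet>c w) / wn) \<cdot>\<^sub>v (A *\<^sub>v w)"
      unfolding P_def
      using mult_minus_distrib_mat_vec[OF A x, of "((x \<bullet>c w) / wn) \<cdot>\<^sub>v w"]
        mult_mat_vec[OF A w, of "(x \<bullet>c w) / wn"] w by simp
    finally have eq0: "0\<^sub>v m = A *\<^sub>v x - ((x \<bullet>c w) / wn) \<cdot>\<^sub>v (A *\<^sub>v w)" .
    have c1: "A *\<^sub>v x \<in> carrier_vec m" using A x by simp
    have c2: "((x \<bullet>c w) / wn) \<cdot>\<^sub>v (A *\<^sub>v w) \<in> carrier_vec m" using A w by simp
    show ?thesis by (rule vec_eq_from_diff[OF c1 c2 eq0])
  qed
  define v where "v = A *\<^sub>v w"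
  have v: "v \<in> carrier_vec m" unfolding v_def using A w by auto
  define beta where "beta = (v \<bullet>c w) / wn"
  have vi: "v $ i = w $ i * beta" if i: "i < m" for i
  proof -
    have e: "unit_vec m i \<in> carrier_vec m" by simp
    have "0 = v \<bullet>c P (unit_vec m i)" using H2[OF Pc[OF e] w Po[OF e]] unfolding v_def by simp
    also have "\<dots> = v \<bullet>c unit_vec m i - cnj ((unit_vec m i \<bullet>c w) / wn) * (v \<bullet>c w)"
      unfolding P_def by (rule cinner_minus_smult[OF v e w])
    also have "v \<bullet>c unit_vec m i = v $ i" using v i by (rule cinner_unit_right)
    also have "unit_vec m i \<bullet>c w = cnj (w $ i)" using w i by (rule cinner_unit_left)
    finally show ?thesis unfolding beta_def using cwn by (simp add: field_simps)
  qed
  have "A = (beta / wn) \<cdot>\<^sub>m mat m m (\<lambda>(i,j). w $ i * cnj (w $ j))"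
  proof (rule eq_matI)
    fix i j assume "i < dim_row ((beta / wn) \<cdot>\<^sub>m mat m m (\<lambda>(i,j). w $ i * cnj (w $ j)))"
      "j < dim_col ((beta / wn) \<cdot>\<^sub>m mat m m (\<lambda>(i,j). w $ i * cnj (w $ j)))"
    then have i: "i < m" and j: "j < m" by auto
    have e: "unit_vec m j \<in> carrier_vec m" by simp
    have "A $$ (i,j) = (A *\<^sub>v unit_vec m j) $ i" using A i j by simp
    also have "\<dots> = ((unit_vec m j \<bullet>c w) / wn) * v $ i" using Ax[OF e] A w i unfolding v_def by simp
    also have "unit_vec m j \<bullet>c w = cnj (w $ j)" using w j by (rule cinner_unit_left)
    finally show "A $$ (i,j) = ((beta / wn) \<cdot>\<^sub>m mat m m (\<lambda>(i,j). w $ i * cnj (w $ j))) $$ (i,j)"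
      using vi[OF i] i j by simp
  qed (use A in auto)
  then show ?thesis by blast
qed


lemma kron_one_smult: "kron (1\<^sub>m dd) (c \<cdot>\<^sub>m M) = c \<cdot>\<^sub>m kron (1\<^sub>m dd) M"
proof (rule eq_matI)
  fix i j assume "i < dim_row (c \<cdot>\<^sub>m kron (1\<^sub>m dd) M)" "j < dim_col (c \<cdot>\<^sub>m kron (1\<^sub>m dd) M)"
  then have i: "i < dd * dim_row M" and j: "j < dd * dim_col M" unfolding kron_def by auto
  have r: "dim_row M > 0" using i by (cases "dim_row M") auto
  have c: "dim_col M > 0" using j by (cases "dim_col M") auto
  have "i mod dim_row M < dim_row M" "j mod dim_col M < dim_col M" using r c by auto
  then show "kron (1\<^sub>m dd) (c \<cdot>\<^sub>m M) $$ (i, j) = (c \<cdot>\<^sub>m kron (1\<^sub>m dd) M) $$ (i, j)"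
    using i j unfolding kron_def by simp
qed (auto simp: kron_def)

lemma four_block_smult:
  fixes c :: complex
  assumes A: "A \<in> carrier_mat r1 c1" and D: "D \<in> carrier_mat r2 c2"
  shows "four_block_mat (c \<cdot>\<^sub>m A) (0\<^sub>m r1 c2) (0\<^sub>m r2 c1) (c \<cdot>\<^sub>m D)
       = c \<cdot>\<^sub>m four_block_mat A (0\<^sub>m r1 c2) (0\<^sub>m r2 c1) D"
proof (rule eq_matI)
  fix i j assume "i < dim_row (c \<cdot>\<^sub>m four_block_mat A (0\<^sub>m r1 c2) (0\<^sub>m r2 c1) D)"
    "j < dim_col (c \<cdot>\<^sub>m four_block_mat A (0\<^sub>m r1 c2) (0\<^sub>m r2 c1) D)"
  then have i: "i < r1 + r2" and j: "j < c1 + c2" using A D by auto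
  show "four_block_mat (c \<cdot>\<^sub>m A) (0\<^sub>m r1 c2) (0\<^sub>m r2 c1) (c \<cdot>\<^sub>m D) $$ (i, j) =
    (c \<cdot>\<^sub>m four_block_mat A (0\<^sub>m r1 c2) (0\<^sub>m r2 c1) D) $$ (i, j)"
    using A D i j by (simp add: index_mat_four_block)
qed (use A D in auto)

lemma Bm_smult:
  assumes "\<forall>k<n. M k \<in> carrier_mat (m k) (m k)" and "\<forall>k<n. M1 k = c \<cdot>\<^sub>m M k"
  shows "Bm n d M1 = c \<cdot>\<^sub>m Bm n d M"
  using assms
proof (induction n)
  case 0
  show ?case unfolding Bm_def by (rule eq_matI) auto
next
  case (Suc n)
  have IH: "Bm n d M1 = c \<cdot>\<^sub>m Bm n d M" using Suc by auto
  have BC: "Bm n d M \<in> carrier_mat (off d m n) (off d m n)" using Bm_col[of n M m d] Suc.prems by auto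
  have Mn: "M n \<in> carrier_mat (m n) (m n)" using Suc.prems by auto
  define K where "K = kron (1\<^sub>m (d n)) (M n)"
  have dMn: "dim_row (M n) = m n" "dim_col (M n) = m n" using Mn by auto
  have dK: "dim_row K = d n * m n" "dim_col K = d n * m n"
    using kron_one_dims[of "d n" "M n"] dMn unfolding K_def by simp_all
  have K: "K \<in> carrier_mat (d n * m n) (d n * m n)" using dK by (intro carrier_matI) simp_all
  have dB: "dim_row (Bm n d M) = off d m n" "dim_col (Bm n d M) = off d m n" using BC by auto
  have K1: "kron (1\<^sub>m (d n)) (M1 n) = c \<cdot>\<^sub>m K" unfolding K_def using Suc.prems by (simp add: kron_one_smult)
  have "Bm (Suc n) d M1 = four_block_mat (c \<cdot>\<^sub>m Bm n d M) (0\<^sub>m (off d m n) (d n * m n)) (0\<^sub>m (d n * m n) (off d m n)) (c \<cdot>\<^sub>m K)"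
    unfolding Bm_Suc Let_def K1 IH by (simp add: dB dK)
  also have "\<dots> = c \<cdot>\<^sub>m four_block_mat (Bm n d M) (0\<^sub>m (off d m n) (d n * m n)) (0\<^sub>m (d n * m n) (off d m n)) K"
    by (rule four_block_smult[OF BC K])
  also have "four_block_mat (Bm n d M) (0\<^sub>m (off d m n) (d n * m n)) (0\<^sub>m (d n * m n) (off d m n)) K = Bm (Suc n) d M"
    unfolding Bm_Suc Let_def K_def[symmetric] dB dK by (rule refl)
  finally show ?case .
qed

lemma adj_dims[simp]: "dim_row (mat_adjoint A) = dim_col A" "dim_col (mat_adjoint A) = dim_row A"
  unfolding mat_adjoint_def by auto

lemma adj_index: "i < dim_col A \<Longrightarrow> j < dim_row A \<Longrightarrow> mat_adjoint A $$ (i,j) = cnj (A $$ (j,i) :: complex)"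
  unfolding mat_adjoint_def by (simp add: mat_of_rows_def)

lemma adj_carrier: "A \<in> carrier_mat r c \<Longrightarrow> mat_adjoint A \<in> carrier_mat c r"
  by (intro carrier_matI) auto

lemma adj_inner:
  fixes A :: "complex mat"
  assumes A: "A \<in> carrier_mat N N" and u: "u \<in> carrier_vec N" and v: "v \<in> carrier_vec N"
  shows "(mat_adjoint A *\<^sub>v u) \<bullet>c v = u \<bullet>c (A *\<^sub>v v)"
proof -
  have "(mat_adjoint A *\<^sub>v u) \<bullet>c v = (\<Sum>i<N. (\<Sum>j<N. cnj (A $$ (j,i)) * u $ j) * cnj (v $ i))"
    using A u v unfolding mult_mat_vec_def scalar_prod_def
    by (simp add: lessThan_atLeast0 adj_index)
  also have "\<dots> = (\<Sum>i<N. \<Sum>j<N. cnj (A $$ (j,i)) * u $ j * cnj (v $ i))"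
    by (simp add: sum_distrib_right)
  also have "\<dots> = (\<Sum>j<N. \<Sum>i<N. cnj (A $$ (j,i)) * u $ j * cnj (v $ i))"
    by (rule sum.swap)
  also have "\<dots> = (\<Sum>j<N. u $ j * cnj (\<Sum>i<N. A $$ (j,i) * v $ i))"
    by (simp add: sum_distrib_left algebra_simps)
  also have "\<dots> = u \<bullet>c (A *\<^sub>v v)"
    using A u v unfolding mult_mat_vec_def scalar_prod_def by (simp add: lessThan_atLeast0)
  finally show ?thesis .
qed

lemma unitary_inner:
  fixes W :: "complex mat"
  assumes W: "W \<in> carrier_mat N N" and WW: "mat_adjoint W * W = 1\<^sub>m N"
    and x: "x \<in> carrier_vec N" and y: "y \<in> carrier_vec N"
  shows "(W *\<^sub>v x) \<bullet>c (W *\<^sub>v y) = x \<bullet>c y"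
proof -
  have "(W *\<^sub>v x) \<bullet>c (W *\<^sub>v y) = (mat_adjoint (mat_adjoint W) *\<^sub>v x) \<bullet>c (W *\<^sub>v y)"
  proof -
    have "mat_adjoint (mat_adjoint W) = W"
      by (rule eq_matI) (use W in \<open>auto simp: adj_index\<close>)
    then show ?thesis by simp
  qed
  also have "\<dots> = x \<bullet>c (mat_adjoint W *\<^sub>v (W *\<^sub>v y))"
    by (rule adj_inner[OF adj_carrier[OF W] x]) (use W y in simp)
  also have "mat_adjoint W *\<^sub>v (W *\<^sub>v y) = y"
    using W y WW by (simp add: assoc_mult_mat_vec[symmetric, of _ N N _ N] adj_carrier)
  finally show ?thesis .
qed


lemma smult_mat_vec: "A \<in> carrier_mat nr nc \<Longrightarrow> v \<in> carrier_vec nc \<Longrightarrow> (k \<cdot>\<^sub>m A) *\<^sub>v v = k \<cdot>\<^sub>v (A *\<^sub>v (v :: complex vec))"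
  by (rule eq_vecI) (auto simp: scalar_prod_def sum_distrib_left mult.assoc)

lemma smult_smult_mat': "(a::complex) \<cdot>\<^sub>m (b \<cdot>\<^sub>m A) = (a * b) \<cdot>\<^sub>m A"
  by (rule eq_matI) auto

lemma one_smult_mat': "(1::complex) \<cdot>\<^sub>m A = A"
  by (rule eq_matI) auto

lemma zero_smult_mat': "A \<in> carrier_mat r c \<Longrightarrow> (0::complex) \<cdot>\<^sub>m A = 0\<^sub>m r c"
  by (rule eq_matI) auto

lemma mat_vec_zero: "A \<in> carrier_mat nr nc \<Longrightarrow> A *\<^sub>v 0\<^sub>v nc = (0\<^sub>v nr :: complex vec)"
  by (intro eq_vecI) (auto simp: scalar_prod_def)

lemma comm_op_Bm: "comm_op W n d M = W * Bm n d M * mat_adjoint W"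
  unfolding comm_op_def Bm_def by simp

lemma comm_op_carrier:
  assumes W: "W \<in> carrier_mat N N" and offN: "off d m n = N" and M: "\<forall>k<n. M k \<in> carrier_mat (m k) (m k)"
  shows "comm_op W n d M \<in> carrier_mat N N"
proof -
  have B: "Bm n d M \<in> carrier_mat N N" using Bm_col[OF M] offN by auto
  show ?thesis unfolding comm_op_Bm using W B adj_carrier[OF W] by auto
qed

lemma comm_act:
  assumes W: "W \<in> carrier_mat N N" and WW: "mat_adjoint W * W = 1\<^sub>m N" and offN: "off d m n = N"
    and M: "\<forall>k<n. M k \<in> carrier_mat (m k) (m k)" and k: "k < n" and dk: "0 < d k"
    and x: "x \<in> carrier_vec (m k)"
  shows "comm_op W n d M *\<^sub>v (W *\<^sub>v emb N (off d m k) (m k) x) = W *\<^sub>v emb N (off d m k) (m k) (M k *\<^sub>v x)"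
proof -
  have B: "Bm n d M \<in> carrier_mat N N" using Bm_col[OF M] offN by auto
  have WA: "mat_adjoint W \<in> carrier_mat N N" using adj_carrier[OF W] .
  have e: "emb N (off d m k) (m k) x \<in> carrier_vec N" by simp
  have "comm_op W n d M *\<^sub>v (W *\<^sub>v emb N (off d m k) (m k) x)
     = W *\<^sub>v (Bm n d M *\<^sub>v (mat_adjoint W *\<^sub>v (W *\<^sub>v emb N (off d m k) (m k) x)))"
    unfolding comm_op_Bm using W B WA e by (simp add: assoc_mult_mat_vec[of _ N N _ N])
  also have "mat_adjoint W *\<^sub>v (W *\<^sub>v emb N (off d m k) (m k) x) = emb N (off d m k) (m k) x"
    using W WA e WW by (simp add: assoc_mult_mat_vec[symmetric, of _ N N _ N])
  also have "Bm n d M *\<^sub>v emb N (off d m k) (m k) x = emb N (off d m k) (m k) (M k *\<^sub>v x)"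
    using Bm_emb[where a=0 and n=n and M=M and m=m and k=k and d=d and x=x, OF M k dk x] offN by simp
  finally show ?thesis .
qed

lemma W_cancel:
  assumes W: "W \<in> carrier_mat N N" and WW: "mat_adjoint W * W = 1\<^sub>m N" and e: "e \<in> carrier_vec N"
    and z: "W *\<^sub>v e = 0\<^sub>v N"
  shows "e = 0\<^sub>v N"
proof -
  have WA: "mat_adjoint W \<in> carrier_mat N N" using adj_carrier[OF W] .
  have "e = mat_adjoint W *\<^sub>v (W *\<^sub>v e)"
    using W WA e WW by (simp add: assoc_mult_mat_vec[symmetric, of _ N N _ N])
  also have "\<dots> = 0\<^sub>v N" using z WA by (intro eq_vecI) (auto simp: scalar_prod_def)
  finally show ?thesis .
qed

lemma mat_zero_from_vec:
  fixes A :: "complex mat"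
  assumes A: "A \<in> carrier_mat mm mm" and z: "\<And>x. x \<in> carrier_vec mm \<Longrightarrow> A *\<^sub>v x = 0\<^sub>v mm"
  shows "A = 0\<^sub>m mm mm"
proof (rule eq_matI)
  fix i j assume "i < dim_row (0\<^sub>m mm mm)" "j < dim_col (0\<^sub>m mm mm)"
  then have i: "i < mm" and j: "j < mm" by auto
  have "A $$ (i,j) = (A *\<^sub>v unit_vec mm j) $ i" using A i j by simp
  also have "\<dots> = 0" using z[of "unit_vec mm j"] i by simp
  finally show "A $$ (i,j) = 0\<^sub>m mm mm $$ (i,j)" using i j by simp
qed (use A in auto)

lemma key_struct:
  fixes W :: "complex mat" and X M' :: "nat \<Rightarrow> complex mat" and w :: "complex vec"
  assumes W: "W \<in> carrier_mat N N" and WW: "mat_adjoint W * W = 1\<^sub>m N" and offN: "off d m n = N"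
    and dpos: "\<forall>k<n. 0 < d k"
    and X: "\<forall>k<n. X k \<in> carrier_mat (m k) (m k)" and k0: "k0 < n"
    and Xz: "\<forall>k<n. k \<noteq> k0 \<longrightarrow> X k = 0\<^sub>m (m k) (m k)"
    and w: "w \<in> carrier_vec (m k0)" and wnz: "w \<noteq> 0\<^sub>v (m k0)"
    and wker: "\<forall>x\<in>carrier_vec (m k0). x \<bullet>c w = 0 \<longrightarrow> X k0 *\<^sub>v x = 0\<^sub>v (m k0)"
    and M: "\<forall>k<n. M' k \<in> carrier_mat (m k) (m k)" and P: "psd N (comm_op W n d M')"
    and Pk: "\<forall>v\<in>carrier_vec N. comm_op W n d X *\<^sub>v v = 0\<^sub>v N \<longrightarrow> (comm_op W n d M' *\<^sub>v v) \<bullet>c v = 0"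
  shows "(\<exists>c. M' k0 = c \<cdot>\<^sub>m mat (m k0) (m k0) (\<lambda>(i,j). w $ i * cnj (w $ j))) \<and>
         (\<forall>k<n. k \<noteq> k0 \<longrightarrow> M' k = 0\<^sub>m (m k) (m k))"
proof -
  define E where "E = (\<lambda>k x. W *\<^sub>v emb N (off d m k) (m k) x)"
  have Ec: "E k x \<in> carrier_vec N" for k x unfolding E_def using W by simp
  have sN: "off d m k + m k \<le> N" if "k < n" for k
    using off_block_le[of k n 0 d m] that dpos offN by auto
  have kerfact: "M' k *\<^sub>v x = 0\<^sub>v (m k) \<and> (\<forall>y\<in>carrier_vec (m k). (M' k *\<^sub>v y) \<bullet>c x = 0)"
    if k: "k < n" and x: "x \<in> carrier_vec (m k)" and Xx: "X k *\<^sub>v x = 0\<^sub>v (m k)" for k x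
  proof -
    have dk: "0 < d k" using dpos k by auto
    have "comm_op W n d X *\<^sub>v E k x = W *\<^sub>v emb N (off d m k) (m k) (X k *\<^sub>v x)"
      unfolding E_def by (rule comm_act[OF W WW offN X k dk x])
    also have "\<dots> = 0\<^sub>v N" unfolding Xx emb_zero using W by (rule mat_vec_zero)
    finally have "(comm_op W n d M' *\<^sub>v E k x) \<bullet>c E k x = 0" using Pk Ec by auto
    note z = this
    have RE: "comm_op W n d M' *\<^sub>v E k x = W *\<^sub>v emb N (off d m k) (m k) (M' k *\<^sub>v x)"
      unfolding E_def by (rule comm_act[OF W WW offN M k dk x])
    have Mx: "M' k *\<^sub>v x \<in> carrier_vec (m k)" using M k x by auto
    have "W *\<^sub>v emb N (off d m k) (m k) (M' k *\<^sub>v x) = 0\<^sub>v N"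
      using psd_ker_vec[OF P Ec z] RE by simp
    then have "emb N (off d m k) (m k) (M' k *\<^sub>v x) = 0\<^sub>v N" using W_cancel[OF W WW] by simp
    then have r1: "M' k *\<^sub>v x = 0\<^sub>v (m k)" using emb_inj[OF sN[OF k] Mx] by simp
    have r2: "(M' k *\<^sub>v y) \<bullet>c x = 0" if y: "y \<in> carrier_vec (m k)" for y
    proof -
      have My: "M' k *\<^sub>v y \<in> carrier_vec (m k)" using M k y by auto
      have "0 = (comm_op W n d M' *\<^sub>v E k y) \<bullet>c E k x" using psd_ker[OF P Ec z Ec] by simp
      also have "comm_op W n d M' *\<^sub>v E k y = W *\<^sub>v emb N (off d m k) (m k) (M' k *\<^sub>v y)"
        unfolding E_def by (rule comm_act[OF W WW offN M k dk y])
      also have "(W *\<^sub>v emb N (off d m k) (m k) (M' k *\<^sub>v y)) \<bullet>c E k x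
          = emb N (off d m k) (m k) (M' k *\<^sub>v y) \<bullet>c emb N (off d m k) (m k) x"
        unfolding E_def by (rule unitary_inner[OF W WW]) simp_all
      also have "\<dots> = (M' k *\<^sub>v y) \<bullet>c x" by (rule emb_inner[OF sN[OF k] My x])
      finally show ?thesis by simp
    qed
    show ?thesis using r1 r2 by blast
  qed
  have other: "\<forall>k<n. k \<noteq> k0 \<longrightarrow> M' k = 0\<^sub>m (m k) (m k)"
  proof (intro allI impI)
    fix k assume k: "k < n" and kk: "k \<noteq> k0"
    have Mk: "M' k \<in> carrier_mat (m k) (m k)" using M k by auto
    show "M' k = 0\<^sub>m (m k) (m k)"
    proof (rule mat_zero_from_vec[OF Mk])
      fix x :: "complex vec" assume x: "x \<in> carrier_vec (m k)"
      have "X k *\<^sub>v x = 0\<^sub>v (m k)" using Xz k kk x by auto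
      then show "M' k *\<^sub>v x = 0\<^sub>v (m k)" using kerfact[OF k x] by blast
    qed
  qed
  have Mk0: "M' k0 \<in> carrier_mat (m k0) (m k0)" using M k0 by auto
  have "\<exists>c. M' k0 = c \<cdot>\<^sub>m mat (m k0) (m k0) (\<lambda>(i,j). w $ i * cnj (w $ j))"
  proof (rule rank1_form[OF Mk0 w wnz])
    fix x :: "complex vec" assume x: "x \<in> carrier_vec (m k0)" and o: "x \<bullet>c w = 0"
    then show "M' k0 *\<^sub>v x = 0\<^sub>v (m k0)" using kerfact[OF k0 x] wker by blast
  next
    fix x y :: "complex vec" assume x: "x \<in> carrier_vec (m k0)" and y: "y \<in> carrier_vec (m k0)" and o: "x \<bullet>c w = 0"
    then show "(M' k0 *\<^sub>v y) \<bullet>c x = 0" using kerfact[OF k0 x] wker by blast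
  qed
  then show ?thesis using other by blast
qed


lemma ptrace_smult:
  assumes R: "R \<in> carrier_mat (dK*dH) (dK*dH)"
  shows "ptrace_K dK dH (c \<cdot>\<^sub>m R) = c \<cdot>\<^sub>m ptrace_K dK dH R"
proof (rule eq_matI)
  fix i j assume "i < dim_row (c \<cdot>\<^sub>m ptrace_K dK dH R)" "j < dim_col (c \<cdot>\<^sub>m ptrace_K dK dH R)"
  then have i: "i < dH" and j: "j < dH" unfolding ptrace_K_def by auto
  have lt: "a * dH + i < dK * dH" "a * dH + j < dK * dH" if "a < dK" for a
  proof -
    have "a * dH + dH \<le> dK * dH" using that by (metis add.commute mult_Suc mult_le_mono1 Suc_leI)
    then show "a * dH + i < dK * dH" "a * dH + j < dK * dH" using i j by linarith+
  qed
  show "ptrace_K dK dH (c \<cdot>\<^sub>m R) $$ (i, j) = (c \<cdot>\<^sub>m ptrace_K dK dH R) $$ (i, j)"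
    using i j R lt unfolding ptrace_K_def by (simp add: sum_distrib_left)
qed (auto simp: ptrace_K_def)

lemma psd_diag:
  fixes R :: "complex mat"
  assumes P: "psd N R" and j: "j < N"
  shows "(R *\<^sub>v unit_vec N j) \<bullet>c unit_vec N j = R $$ (j,j)" "0 \<le> R $$ (j,j)"
proof -
  have R: "R \<in> carrier_mat N N" using P unfolding psd_def by auto
  have "(R *\<^sub>v unit_vec N j) \<bullet>c unit_vec N j = (R *\<^sub>v unit_vec N j) $ j"
    by (rule cinner_unit_right) (use R j in simp_all)
  also have "\<dots> = R $$ (j,j)" using R j by simp
  finally show e: "(R *\<^sub>v unit_vec N j) \<bullet>c unit_vec N j = R $$ (j,j)" .
  have "0 \<le> (R *\<^sub>v unit_vec N j) \<bullet>c unit_vec N j" using P unfolding psd_def by simp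
  then show "0 \<le> R $$ (j,j)" unfolding e .
qed

lemma ptrace_nonzero:
  fixes R :: "complex mat"
  assumes P: "psd (dK*dH) R" and nz: "R \<noteq> 0\<^sub>m (dK*dH) (dK*dH)"
  shows "ptrace_K dK dH R \<noteq> 0\<^sub>m dH dH"
proof
  assume pz: "ptrace_K dK dH R = 0\<^sub>m dH dH"
  have R: "R \<in> carrier_mat (dK*dH) (dK*dH)" using P unfolding psd_def by auto
  have diag0: "R $$ (j,j) = 0" if j: "j < dK*dH" for j
  proof -
    have dH: "dH > 0" using j by (cases dH) auto
    define i a where "i = j mod dH" and "a = j div dH"
    have i: "i < dH" using dH unfolding i_def by simp
    have a: "a < dK" using j dH unfolding a_def by (simp add: less_mult_imp_div_less)
    have ja: "j = a * dH + i" unfolding i_def a_def by simp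
    have lt: "b * dH + i < dK * dH" if "b < dK" for b
    proof -
      have "b * dH + dH \<le> dK * dH" using that by (metis add.commute mult_Suc mult_le_mono1 Suc_leI)
      then show ?thesis using i by linarith
    qed
    have "(\<Sum>b<dK. R $$ (b*dH+i, b*dH+i)) = ptrace_K dK dH R $$ (i,i)"
      unfolding ptrace_K_def using i by simp
    also have "\<dots> = 0" using pz i by simp
    finally have s0: "(\<Sum>b<dK. R $$ (b*dH+i, b*dH+i)) = 0" .
    have nn: "\<forall>b\<in>{..<dK}. 0 \<le> R $$ (b*dH+i, b*dH+i)" using psd_diag(2)[OF P] lt by auto
    have "\<forall>b\<in>{..<dK}. R $$ (b*dH+i, b*dH+i) = 0"
      using sum_nonneg_eq_0_iff[of "{..<dK}" "\<lambda>b. R $$ (b*dH+i, b*dH+i)"] nn s0 by simp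
    then show ?thesis using a ja by auto
  qed
  have "R = 0\<^sub>m (dK*dH) (dK*dH)"
  proof (rule eq_matI)
    fix r j assume "r < dim_row (0\<^sub>m (dK * dH) (dK * dH))" "j < dim_col (0\<^sub>m (dK * dH) (dK * dH))"
    then have r: "r < dK*dH" and j: "j < dK*dH" by auto
    have "(R *\<^sub>v unit_vec (dK*dH) j) \<bullet>c unit_vec (dK*dH) j = 0"
      using psd_diag(1)[OF P j] diag0[OF j] by simp
    then have "R *\<^sub>v unit_vec (dK*dH) j = 0\<^sub>v (dK*dH)" using psd_ker_vec[OF P] by simp
    then have "(R *\<^sub>v unit_vec (dK*dH) j) $ r = 0" using r by simp
    then show "R $$ (r, j) = 0\<^sub>m (dK * dH) (dK * dH) $$ (r, j)" using R r j by simp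
  qed (use R in auto)
  with nz show False by simp
qed

lemma cplx_conv_zero:
  fixes a b :: complex and t :: real
  assumes "0 \<le> a" "0 \<le> b" "0 < t" "t < 1" "complex_of_real t * a + complex_of_real (1 - t) * b = 0"
  shows "a = 0"
proof -
  have ra: "Re a \<ge> 0" "Im a = 0" "Re b \<ge> 0" using assms(1,2) by (auto simp: less_eq_complex_def)
  have "t * Re a + (1 - t) * Re b = 0" using arg_cong[OF assms(5), of Re] by simp
  moreover have "t * Re a \<ge> 0" "(1 - t) * Re b \<ge> 0" using ra assms(3,4) by auto
  ultimately have "t * Re a = 0" by linarith
  then have "Re a = 0" using assms(3) by simp
  then show ?thesis using ra by (simp add: complex_eq_iff)
qed


theorem mainTheorem14:
  fixes G :: "('g,'b) monoid_scheme"
    and dH dK n :: nat and d m :: "nat \<Rightarrow> nat"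
    and U V :: "'g \<Rightarrow> complex mat" and p :: "nat \<Rightarrow> 'g \<Rightarrow> complex mat"
    and W K0 R :: "complex mat" and X :: "nat \<Rightarrow> complex mat"
  assumes "group G"
    and "unitary_rep G dH U" and "unitary_rep G dK V"
    and "isotypic_decomp G dK dH U V n d m p W"
    and "psd dH K0" and "psd dH (1\<^sub>m dH - K0)"
    and "\<forall>k<n. X k \<in> carrier_mat (m k) (m k)"
    and "\<exists>!k. k < n \<and> X k \<noteq> 0\<^sub>m (m k) (m k)"
    and "\<forall>k<n. X k \<noteq> 0\<^sub>m (m k) (m k) \<longrightarrow> vec_space.rank (m k) (X k) = 1"
    and "R = mat_adjoint (comm_op W n d X) * comm_op W n d X"
    and "R \<in> C_set dK dH W n d m K0"
  shows "extremal_in (C_set dK dH W n d m K0) R"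
proof -
  define N where "N = dK * dH"
  note iso = assms(4)[unfolded isotypic_decomp_def]
  have dpos: "\<forall>k<n. 0 < d k" using iso unfolding irreducible_rep_def by auto
  have offN: "off d m n = N" unfolding off_def N_def using iso by simp
  have Wu: "unitary_mat N W" using iso unfolding N_def by simp
  have W: "W \<in> carrier_mat N N" and WW: "mat_adjoint W * W = 1\<^sub>m N"
    using Wu unfolding unitary_mat_def by auto
  have WA: "mat_adjoint W \<in> carrier_mat N N" using adj_carrier[OF W] .
  have X: "\<forall>k<n. X k \<in> carrier_mat (m k) (m k)" using assms(7) .
  obtain k0 where k0: "k0 < n" "X k0 \<noteq> 0\<^sub>m (m k0) (m k0)"
    and uniq: "\<And>k. k < n \<and> X k \<noteq> 0\<^sub>m (m k) (m k) \<Longrightarrow> k = k0"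
    using assms(8) by blast
  have Xz: "\<forall>k<n. k \<noteq> k0 \<longrightarrow> X k = 0\<^sub>m (m k) (m k)" using uniq by blast
  have Xk0: "X k0 \<in> carrier_mat (m k0) (m k0)" using X k0 by auto
  have rk: "vec_space.rank (m k0) (X k0) = 1" using assms(9) k0 by auto
  obtain w where w: "w \<in> carrier_vec (m k0)" "w \<noteq> 0\<^sub>v (m k0)"
    and wker: "\<forall>x\<in>carrier_vec (m k0). x \<bullet>c w = 0 \<longrightarrow> X k0 *\<^sub>v x = 0\<^sub>v (m k0)"
    using rank1_ker[OF Xk0 k0(2) rk] by blast
  define WWm where "WWm = mat (m k0) (m k0) (\<lambda>(i,j). w $ i * cnj (w $ j))"
  have WWc: "WWm \<in> carrier_mat (m k0) (m k0)" unfolding WWm_def by simp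
  have inC: "R' \<in> C_set dK dH W n d m K0 \<longleftrightarrow>
      (\<exists>M. R' = comm_op W n d M \<and> (\<forall>k<n. M k \<in> carrier_mat (m k) (m k))) \<and> psd N R' \<and> ptrace_K dK dH R' = K0" for R'
    unfolding C_set_def commutant_def N_def by blast
  obtain M0 where RM0: "R = comm_op W n d M0" and M0: "\<forall>k<n. M0 k \<in> carrier_mat (m k) (m k)"
    and psdR: "psd N R" and ptR: "ptrace_K dK dH R = K0"
    using assms(11) unfolding inC by blast
  have B0: "Bm n d M0 \<in> carrier_mat N N" using Bm_col[OF M0] offN by auto
  define Z where "Z = comm_op W n d X"
  have Zc: "Z \<in> carrier_mat N N" unfolding Z_def by (rule comm_op_carrier[OF W offN X])
  have ZA: "mat_adjoint Z \<in> carrier_mat N N" using adj_carrier[OF Zc] .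
  have RZ: "R = mat_adjoint Z * Z" using assms(10) unfolding Z_def .
  have Rc: "R \<in> carrier_mat N N" using psdR unfolding psd_def by auto
  have Rv: "R *\<^sub>v v = mat_adjoint Z *\<^sub>v (Z *\<^sub>v v)" if "v \<in> carrier_vec N" for v
    unfolding RZ using ZA Zc that by simp
  have PR: "\<forall>v\<in>carrier_vec N. Z *\<^sub>v v = 0\<^sub>v N \<longrightarrow> (R *\<^sub>v v) \<bullet>c v = 0"
  proof (intro ballI impI)
    fix v :: "complex vec" assume v: "v \<in> carrier_vec N" and z: "Z *\<^sub>v v = 0\<^sub>v N"
    have "R *\<^sub>v v = 0\<^sub>v N" unfolding Rv[OF v] z by (rule mat_vec_zero[OF ZA])
    then show "(R *\<^sub>v v) \<bullet>c v = 0" using v by simp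
  qed
  have ks0: "(\<exists>c. M0 k0 = c \<cdot>\<^sub>m WWm) \<and> (\<forall>k<n. k \<noteq> k0 \<longrightarrow> M0 k = 0\<^sub>m (m k) (m k))"
    unfolding WWm_def
    by (rule key_struct[OF W WW offN dpos X k0(1) Xz w wker M0]) (use psdR PR RM0 Z_def in auto)
  then obtain c0 where c0: "M0 k0 = c0 \<cdot>\<^sub>m WWm" and M0z: "\<forall>k<n. k \<noteq> k0 \<longrightarrow> M0 k = 0\<^sub>m (m k) (m k)"
    by blast
  have Rnz: "R \<noteq> 0\<^sub>m N N"
  proof
    assume R0: "R = 0\<^sub>m N N"
    have "X k0 = 0\<^sub>m (m k0) (m k0)"
    proof (rule mat_zero_from_vec[OF Xk0])
      fix x :: "complex vec" assume x: "x \<in> carrier_vec (m k0)"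
      define v where "v = W *\<^sub>v emb N (off d m k0) (m k0) x"
      have v: "v \<in> carrier_vec N" unfolding v_def using W by simp
      have Zv: "Z *\<^sub>v v \<in> carrier_vec N" using Zc v by simp
      have z0: "0\<^sub>m N N *\<^sub>v v = 0\<^sub>v N" using v by (intro eq_vecI) (auto simp: scalar_prod_def)
      have "(Z *\<^sub>v v) \<bullet>c (Z *\<^sub>v v) = (mat_adjoint Z *\<^sub>v (Z *\<^sub>v v)) \<bullet>c v"
        using adj_inner[OF Zc Zv v] by simp
      also have "\<dots> = (R *\<^sub>v v) \<bullet>c v" using Rv[OF v] by simp
      also have "\<dots> = 0" unfolding R0 z0 using v by simp
      finally have "Z *\<^sub>v v = 0\<^sub>v N" using conjugate_square_eq_0_vec[OF Zv] by simp
      moreover have "Z *\<^sub>v v = W *\<^sub>v emb N (off d m k0) (m k0) (X k0 *\<^sub>v x)"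
        unfolding Z_def v_def using comm_act[OF W WW offN X k0(1) _ x] dpos k0 by simp
      ultimately have "emb N (off d m k0) (m k0) (X k0 *\<^sub>v x) = 0\<^sub>v N"
        using W_cancel[OF W WW] by simp
      moreover have "off d m k0 + m k0 \<le> N" using off_block_le[of k0 n 0 d m] k0 dpos offN by auto
      ultimately show "X k0 *\<^sub>v x = 0\<^sub>v (m k0)" using emb_inj Xk0 x by auto
    qed
    with k0(2) show False by simp
  qed
  have c0nz: "c0 \<noteq> 0"
  proof
    assume c00: "c0 = 0"
    have "\<forall>k<n. M0 k = 0 \<cdot>\<^sub>m M0 k"
    proof (intro allI impI)
      fix k assume k: "k < n"
      have "M0 k = 0\<^sub>m (m k) (m k)"
      proof (cases "k = k0")
        case True
        then show ?thesis using c0 c00 zero_smult_mat'[OF WWc] by simp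
      next
        case False
        then show ?thesis using M0z k by simp
      qed
      then show "M0 k = 0 \<cdot>\<^sub>m M0 k" by simp
    qed
    then have "Bm n d M0 = 0 \<cdot>\<^sub>m Bm n d M0" using Bm_smult[OF M0] by blast
    also have "\<dots> = 0\<^sub>m N N" using zero_smult_mat'[OF B0] .
    finally have "R = 0\<^sub>m N N" unfolding RM0 comm_op_Bm using W WA by simp
    with Rnz show False by simp
  qed
  have K0nz: "K0 \<noteq> 0\<^sub>m dH dH" using ptrace_nonzero[of dK dH R] psdR Rnz ptR unfolding N_def by simp
  have K0c: "K0 \<in> carrier_mat dH dH" using assms(5) unfolding psd_def by auto
  have one_side: "R1 = R" if R1C: "R1 \<in> C_set dK dH W n d m K0" and R2C: "R2 \<in> C_set dK dH W n d m K0"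
    and t: "0 < t" "t < 1" and decomp: "R = complex_of_real t \<cdot>\<^sub>m R1 + complex_of_real (1 - t) \<cdot>\<^sub>m R2"
    for R1 R2 t
  proof -
    obtain M1 where RM1: "R1 = comm_op W n d M1" and M1: "\<forall>k<n. M1 k \<in> carrier_mat (m k) (m k)"
      and psd1: "psd N R1" and pt1: "ptrace_K dK dH R1 = K0"
      using R1C unfolding inC by blast
    have psd2: "psd N R2" using R2C unfolding inC by blast
    have R1c: "R1 \<in> carrier_mat N N" using psd1 unfolding psd_def by auto
    have R2c: "R2 \<in> carrier_mat N N" using psd2 unfolding psd_def by auto
    have PR1: "\<forall>v\<in>carrier_vec N. Z *\<^sub>v v = 0\<^sub>v N \<longrightarrow> (R1 *\<^sub>v v) \<bullet>c v = 0"
    proof (intro ballI impI)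
      fix v :: "complex vec" assume v: "v \<in> carrier_vec N" and z: "Z *\<^sub>v v = 0\<^sub>v N"
      have cv: "conjugate v \<in> carrier_vec N" using v by simp
      have a1: "R1 *\<^sub>v v \<in> carrier_vec N" "R2 *\<^sub>v v \<in> carrier_vec N" using R1c R2c v by auto
      have "R *\<^sub>v v = complex_of_real t \<cdot>\<^sub>v (R1 *\<^sub>v v) + complex_of_real (1 - t) \<cdot>\<^sub>v (R2 *\<^sub>v v)"
        unfolding decomp using R1c R2c v
        by (simp add: add_mult_distrib_mat_vec[of _ N N] smult_mat_vec[of _ N N])
      then have "(R *\<^sub>v v) \<bullet>c v = complex_of_real t * ((R1 *\<^sub>v v) \<bullet>c v) + complex_of_real (1 - t) * ((R2 *\<^sub>v v) \<bullet>c v)"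
        using a1 cv by (simp add: add_scalar_prod_distrib[of _ N])
      then have "complex_of_real t * ((R1 *\<^sub>v v) \<bullet>c v) + complex_of_real (1 - t) * ((R2 *\<^sub>v v) \<bullet>c v) = 0"
        using PR v z by simp
      moreover have "0 \<le> (R1 *\<^sub>v v) \<bullet>c v" "0 \<le> (R2 *\<^sub>v v) \<bullet>c v"
        using psd1 psd2 v unfolding psd_def by auto
      ultimately show "(R1 *\<^sub>v v) \<bullet>c v = 0" using cplx_conv_zero t by blast
    qed
    have ks1: "(\<exists>c. M1 k0 = c \<cdot>\<^sub>m WWm) \<and> (\<forall>k<n. k \<noteq> k0 \<longrightarrow> M1 k = 0\<^sub>m (m k) (m k))"
      unfolding WWm_def
      by (rule key_struct[OF W WW offN dpos X k0(1) Xz w wker M1]) (use psd1 PR1 RM1 Z_def in auto)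
    then obtain c1 where c1: "M1 k0 = c1 \<cdot>\<^sub>m WWm" and M1z: "\<forall>k<n. k \<noteq> k0 \<longrightarrow> M1 k = 0\<^sub>m (m k) (m k)"
      by blast
    define lam where "lam = c1 / c0"
    have "\<forall>k<n. M1 k = lam \<cdot>\<^sub>m M0 k"
    proof (intro allI impI)
      fix k assume k: "k < n"
      show "M1 k = lam \<cdot>\<^sub>m M0 k"
      proof (cases "k = k0")
        case True
        then show ?thesis using c0 c1 c0nz unfolding lam_def by (simp add: smult_smult_mat')
      next
        case False
        then show ?thesis using M0z M1z k by simp
      qed
    qed
    then have B1: "Bm n d M1 = lam \<cdot>\<^sub>m Bm n d M0" using Bm_smult[OF M0] by blast
    have R1R: "R1 = lam \<cdot>\<^sub>m R"
      unfolding RM1 RM0 comm_op_Bm B1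
      using W WA B0 by (simp add: mult_smult_distrib[of _ N N] mult_smult_assoc_mat[of _ N N])
    have "K0 = lam \<cdot>\<^sub>m K0" using pt1 ptR ptrace_smult[of R dK dH lam] Rc unfolding R1R N_def by simp
    have lam1: "lam = 1"
    proof (rule ccontr)
      assume ne: "lam \<noteq> 1"
      have "K0 = 0\<^sub>m dH dH"
      proof (rule eq_matI)
        fix i j assume "i < dim_row (0\<^sub>m dH dH)" "j < dim_col (0\<^sub>m dH dH)"
        then have i: "i < dH" and j: "j < dH" by auto
        have "K0 $$ (i,j) = lam * K0 $$ (i,j)"
          using arg_cong[OF \<open>K0 = lam \<cdot>\<^sub>m K0\<close>, of "\<lambda>A. A $$ (i,j)"] K0c i j by simp
        then have "(1 - lam) * K0 $$ (i,j) = 0" by (simp add: algebra_simps)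
        then show "K0 $$ (i,j) = 0\<^sub>m dH dH $$ (i,j)" using ne i j by simp
      qed (use K0c in auto)
      with K0nz show False by simp
    qed
    show "R1 = R" using R1R lam1 by (simp add: one_smult_mat')
  qed
  have main: "\<forall>R1\<in>C_set dK dH W n d m K0. \<forall>R2\<in>C_set dK dH W n d m K0. \<forall>t::real. 0 < t \<and> t < 1 \<and>
        R = complex_of_real t \<cdot>\<^sub>m R1 + complex_of_real (1 - t) \<cdot>\<^sub>m R2 \<longrightarrow> R1 = R \<and> R2 = R"
  proof (intro ballI allI impI)
    fix R1 R2 t assume R1C: "R1 \<in> C_set dK dH W n d m K0" and R2C: "R2 \<in> C_set dK dH W n d m K0"
      and h: "0 < t \<and> t < 1 \<and> R = complex_of_real t \<cdot>\<^sub>m R1 + complex_of_real (1 - t) \<cdot>\<^sub>m R2"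
    have R1eq: "R1 = R" using one_side[OF R1C R2C] h by blast
    have R1c: "R1 \<in> carrier_mat N N" and R2c: "R2 \<in> carrier_mat N N"
      using R1C R2C unfolding inC psd_def by auto
    have "R = complex_of_real (1 - t) \<cdot>\<^sub>m R2 + complex_of_real (1 - (1 - t)) \<cdot>\<^sub>m R1"
      using h R1c R2c by (simp add: comm_add_mat[of _ N N])
    then have "R2 = R" using one_side[OF R2C R1C, of "1 - t"] h by simp
    then show "R1 = R \<and> R2 = R" using R1eq by simp
  qed
  show ?thesis unfolding extremal_in_def using assms(11) main by blast
qed

end
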